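(* If $(g(z),f(z))$ is a Riordan matrix that is a pseudo-involution, then for every positive integer $n$ the Riordan matrix $(g(z)^n, f(z))$ is also a pseudo-involution.
   Context: A Riordan matrix is a pair $(g(z),f(z))$ of formal power series over $\mathbb{C}$ with $g(z)=\sum_{n\ge 0} g_n z^n$, $g_0\neq 0$, and $f(z)=\sum_{n\ge 1} f_n z^n$ with $f_1\neq 0$; it represents the infinite lower-triangular matrix whose $k$-th column ($k\ge 0$) has generating function $g(z)f(z)^k$. Riordan matrices form a group under matrix multiplication, where $(g(z),f(z))*(h(z),l(z))=(g(z)h(f(z)),\,l(f(z)))$ and the identity is $(1,z)$. Let $M=(1,-z)$. A Riordan matrix $L$ is called a pseudo-involution if $(L*M)*(L*M)=(1,z)$. *)

theory Defs
  imports "HOL-Computational_Algebra.Formal_Power_Series" Complex_Main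
begin

type_synonym riordan = "complex fps \<times> complex fps"

definition is_riordan :: "riordan \<Rightarrow> bool" where
  "is_riordan L \<longleftrightarrow> fps_nth (fst L) 0 \<noteq> 0 \<and> fps_nth (snd L) 0 = 0 \<and> fps_nth (snd L) 1 \<noteq> 0"

definition riordan_mult :: "riordan \<Rightarrow> riordan \<Rightarrow> riordan" where
  "riordan_mult L K = (fst L * (fst K oo snd L), snd K oo snd L)"

definition riordan_id :: riordan where
  "riordan_id = (1, fps_X)"

definition riordan_M :: riordan where
  "riordan_M = (1, - fps_X)"

definition pseudo_involution :: "riordan \<Rightarrow> bool" where
  "pseudo_involution L \<longleftrightarrow> is_riordan L \<and>
     riordan_mult (riordan_mult L riordan_M) (riordan_mult L riordan_M) = riordan_id"

end

theory Submission
  imports Defs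
begin

lemma pi_char:
  fixes g f :: "complex fps"
  assumes "is_riordan (g, f)"
  shows "pseudo_involution (g, f) \<longleftrightarrow> g * (g oo (-f)) = 1 \<and> (-f) oo (-f) = fps_X"
proof -
  have "(- fps_X) oo f = - f" using assms by (simp add: fps_compose_uminus is_riordan_def)
  then show ?thesis using assms
    by (simp add: pseudo_involution_def riordan_mult_def riordan_M_def riordan_id_def)
qed

theorem proposition24:
  fixes g f :: "complex fps" and n :: nat
  assumes "pseudo_involution (g, f)" and "n \<ge> 1"
  shows "pseudo_involution (g ^ n, f)"
proof -
  have r: "is_riordan (g, f)" using assms(1) by (simp add: pseudo_involution_def)
  have r2: "is_riordan (g ^ n, f)" using r by (simp add: is_riordan_def fps_nth_power_0)
  have h: "g * (g oo (-f)) = 1" "(-f) oo (-f) = fps_X" using pi_char[OF r] assms(1) by auto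
  have f0: "fps_nth (-f) 0 = 0" using r by (simp add: is_riordan_def)
  have "g ^ n * (g ^ n oo (-f)) = (g * (g oo (-f))) ^ n"
    by (simp add: fps_compose_power[OF f0, symmetric] power_mult_distrib)
  also have "\<dots> = 1" using h by simp
  finally show ?thesis using pi_char[OF r2] h by simp
qed

end
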